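(* Let $n\ge1$ and, for each $i=1,\dots,n$, let $m_i\ge1$, let $SCR_{i1},\dots,SCR_{im_i}\ge0$ be real numbers and let $P_i=(\rho_{iy,iw})_{y,w=1}^{m_i}$ be a correlation matrix. Let $(\rho_{i,w})_{i,w=1}^n$ be a correlation matrix. Define $$SCR_i=\sqrt{\sum_{x=1}^{m_i}\sum_{y=1}^{m_i} SCR_{ix}SCR_{iy}\rho_{ix,iy}},\qquad BSCR=\sqrt{\sum_{i=1}^n\sum_{w=1}^n SCR_iSCR_w\rho_{i,w}},$$ so that $BSCR$ is a function of all $SCR_{iy}$, and assume $SCR_i>0$ for all $i$ and $BSCR>0$. Set $AR_i=\frac{\sum_{j=1}^n SCR_j\rho_{i,j}}{BSCR}$ and $AR_{iy}=\frac{\sum_{w=1}^{m_i} SCR_{iw}\rho_{iy,iw}}{SCR_i}$, and $SCR_{iy}^{Ai}=SCR_{iy}\cdot AR_{iy}$. Then the Euler allocation of $BSCR$ among all sub-risks, $SCR_{iy}^A:=SCR_{iy}\cdot\frac{\partial BSCR}{\partial SCR_{iy}}$, is uniquely determined and satisfies $$BSCR=\sum_{i=1}^n\sum_{y=1}^{m_i}SCR_{iy}^A=\sum_{i=1}^n\sum_{y=1}^{m_i}SCR_{iy}\cdot AR_{iy}\cdot AR_i=\sum_{i=1}^n\sum_{y=1}^{m_i}SCR_{iy}^{Ai}\cdot AR_i,$$ i.e. $SCR_{iy}^A=SCR_{iy}\cdot\frac{\sum_{w=1}^{m_i}SCR_{iw}\rho_{iy,iw}}{SCR_i}\cdot AR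_i$.
   Context: This is the two-level Solvency II Standard Formula aggregation: sub-risk capital requirements $SCR_{iy}$ are aggregated into risk-module requirements $SCR_i$, which are aggregated into the Basic Solvency Capital Requirement $BSCR$, with regulator-given correlation coefficients. A correlation matrix means a symmetric positive semidefinite real matrix with unit diagonal. The Euler allocation principle: for a function $f$ positively homogeneous of degree one, $f(x)=\sum_k x_k\,\partial f/\partial x_k$, and the $k$-th term is the amount allocated to component $k$. *)

theory Defs
  imports "HOL-Analysis.Analysis"
begin

text \<open>Indices are 0-based: risk modules i < n, sub-risks y < m i.\<close>

definition corr_matrix :: "nat \<Rightarrow> (nat \<Rightarrow> nat \<Rightarrow> real) \<Rightarrow> bool" where
  "corr_matrix k P \<longleftrightarrow>
     (\<forall>a<k. P a a = 1) \<and>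
     (\<forall>a<k. \<forall>b<k. P a b = P b a) \<and>
     (\<forall>v :: nat \<Rightarrow> real. 0 \<le> (\<Sum>a<k. \<Sum>b<k. v a * v b * P a b))"

text \<open>S i y = SCR_{iy}; rs i y w = rho_{iy,iw}; r i w = rho_{i,w}.\<close>

definition SCR_mod :: "(nat \<Rightarrow> nat) \<Rightarrow> (nat \<Rightarrow> nat \<Rightarrow> nat \<Rightarrow> real)
    \<Rightarrow> (nat \<Rightarrow> nat \<Rightarrow> real) \<Rightarrow> nat \<Rightarrow> real" where
  "SCR_mod m rs S i = sqrt (\<Sum>x<m i. \<Sum>y<m i. S i x * S i y * rs i x y)"

definition BSCR :: "nat \<Rightarrow> (nat \<Rightarrow> nat) \<Rightarrow> (nat \<Rightarrow> nat \<Rightarrow> nat \<Rightarrow> real)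
    \<Rightarrow> (nat \<Rightarrow> nat \<Rightarrow> real) \<Rightarrow> (nat \<Rightarrow> nat \<Rightarrow> real) \<Rightarrow> real" where
  "BSCR n m rs r S = sqrt (\<Sum>i<n. \<Sum>w<n. SCR_mod m rs S i * SCR_mod m rs S w * r i w)"

definition AR_mod :: "nat \<Rightarrow> (nat \<Rightarrow> nat) \<Rightarrow> (nat \<Rightarrow> nat \<Rightarrow> nat \<Rightarrow> real)
    \<Rightarrow> (nat \<Rightarrow> nat \<Rightarrow> real) \<Rightarrow> (nat \<Rightarrow> nat \<Rightarrow> real) \<Rightarrow> nat \<Rightarrow> real" where
  "AR_mod n m rs r S i = (\<Sum>j<n. SCR_mod m rs S j * r i j) / BSCR n m rs r S"

definition AR_sub :: "(nat \<Rightarrow> nat) \<Rightarrow> (nat \<Rightarrow> nat \<Rightarrow> nat \<Rightarrow> real)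
    \<Rightarrow> (nat \<Rightarrow> nat \<Rightarrow> real) \<Rightarrow> nat \<Rightarrow> nat \<Rightarrow> real" where
  "AR_sub m rs S i y = (\<Sum>w<m i. S i w * rs i y w) / SCR_mod m rs S i"

definition SCR_Ai :: "(nat \<Rightarrow> nat) \<Rightarrow> (nat \<Rightarrow> nat \<Rightarrow> nat \<Rightarrow> real)
    \<Rightarrow> (nat \<Rightarrow> nat \<Rightarrow> real) \<Rightarrow> nat \<Rightarrow> nat \<Rightarrow> real" where
  "SCR_Ai m rs S i y = S i y * AR_sub m rs S i y"

definition partial_at :: "((nat \<Rightarrow> nat \<Rightarrow> real) \<Rightarrow> real) \<Rightarrow> (nat \<Rightarrow> nat \<Rightarrow> real)
    \<Rightarrow> nat \<Rightarrow> nat \<Rightarrow> real" where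
  "partial_at F S i y = deriv (\<lambda>t. F (S(i := (S i)(y := t)))) (S i y)"

end

theory Submission
  imports Defs
begin

lemma upd_deriv:
  assumes "DERIV g t0 :> g'"
  shows "DERIV (\<lambda>t. (a(y := g t)) x) t0 :> (if x = y then g' else 0)"
  using assms by (cases "x = y") auto

lemma quad_deriv:
  fixes a :: "nat \<Rightarrow> real" and M :: "nat \<Rightarrow> nat \<Rightarrow> real"
  assumes fin: "finite A" and yA: "y \<in> A"
    and sym: "\<forall>u\<in>A. \<forall>v\<in>A. M u v = M v u"
    and g: "DERIV g tz :> g'" and gtz: "g tz = a y"
  shows "DERIV (\<lambda>t. \<Sum>x\<in>A. \<Sum>z\<in>A. (a(y := g t)) x * (a(y := g t)) z * M x z) tz
           :> 2 * (\<Sum>z\<in>A. a z * M y z) * g'"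
proof -
  have au: "a(y := g tz) = a" using gtz by auto
  have D: "DERIV (\<lambda>t. \<Sum>x\<in>A. \<Sum>z\<in>A. (a(y := g t)) x * (a(y := g t)) z * M x z) tz
       :> (\<Sum>x\<in>A. \<Sum>z\<in>A. ((if x = y then g' else 0) * a z + a x * (if z = y then g' else 0)) * M x z)"
  proof (intro DERIV_sum)
    fix x z
    have hx: "DERIV (\<lambda>t. (a(y := g t)) x) tz :> (if x = y then g' else 0)" by (rule upd_deriv[OF g])
    have hz: "DERIV (\<lambda>t. (a(y := g t)) z) tz :> (if z = y then g' else 0)" by (rule upd_deriv[OF g])
    have "DERIV (\<lambda>t. (a(y := g t)) x * (a(y := g t)) z * M x z) tz :>
       ((if x = y then g' else 0) * (a(y := g tz)) z + (if z = y then g' else 0) * (a(y := g tz)) x) * M x z"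
      using DERIV_cmult_right[OF DERIV_mult[OF hx hz], of "M x z"] .
    then show "DERIV (\<lambda>t. (a(y := g t)) x * (a(y := g t)) z * M x z) tz :>
       ((if x = y then g' else 0) * a z + a x * (if z = y then g' else 0)) * M x z"
      using au by (simp add: algebra_simps)
  qed
  have "(\<Sum>x\<in>A. \<Sum>z\<in>A. ((if x = y then g' else 0) * a z + a x * (if z = y then g' else 0)) * M x z)
     = (\<Sum>x\<in>A. \<Sum>z\<in>A. (if x = y then g' * a z * M x z else 0))
       + (\<Sum>x\<in>A. \<Sum>z\<in>A. (if z = y then g' * a x * M x z else 0))"
    by (simp add: sum.distrib[symmetric], intro sum.cong refl, auto simp: algebra_simps)
  also have "\<dots> = (\<Sum>z\<in>A. g' * a z * M y z) + (\<Sum>x\<in>A. g' * a x * M x y)"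
    using fin yA by (simp add: sum.delta' sum.swap[of _ A A] if_distrib cong: if_cong)
  also have "(\<Sum>x\<in>A. g' * a x * M x y) = (\<Sum>z\<in>A. g' * a z * M y z)"
    using sym yA by (intro sum.cong) auto
  also have "(\<Sum>z\<in>A. g' * a z * M y z) + (\<Sum>z\<in>A. g' * a z * M y z) = 2 * (\<Sum>z\<in>A. a z * M y z) * g'"
    by (simp add: sum_distrib_left sum_distrib_right algebra_simps)
  finally show ?thesis using D by simp
qed


lemma sqrt_sq_pos: "sqrt q > 0 \<Longrightarrow> (sqrt q)^2 = q"
  using real_sqrt_gt_zero real_sqrt_pow2 by (metis less_eq_real_def real_sqrt_le_0_iff linorder_not_le)

lemma half_inv: "inverse (s::real) / 2 * (2 * X * 1) = X / s"
  by (simp add: inverse_eq_divide)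

lemma half_inv2: assumes "s > 0" shows "inverse (sqrt ((s::real)^2)) / 2 * (2 * X * A) = A * (X / s)"
proof -
  have "sqrt (s^2) = s" using assms by simp
  then show ?thesis by (simp add: inverse_eq_divide)
qed

theorem theorem3:
  fixes n :: nat and m :: "nat \<Rightarrow> nat"
    and S :: "nat \<Rightarrow> nat \<Rightarrow> real"
    and rs :: "nat \<Rightarrow> nat \<Rightarrow> nat \<Rightarrow> real"
    and r :: "nat \<Rightarrow> nat \<Rightarrow> real"
  assumes "n \<ge> 1"
    and "\<forall>i<n. m i \<ge> 1"
    and "\<forall>i<n. \<forall>y<m i. S i y \<ge> 0"
    and "\<forall>i<n. corr_matrix (m i) (rs i)"
    and "corr_matrix n r"
    and "\<forall>i<n. SCR_mod m rs S i > 0"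
    and "BSCR n m rs r S > 0"
  shows "(\<forall>i<n. \<forall>y<m i.
            ((\<lambda>t. BSCR n m rs r (S(i := (S i)(y := t))))
               has_real_derivative (AR_sub m rs S i y * AR_mod n m rs r S i)) (at (S i y)))
       \<and> BSCR n m rs r S = (\<Sum>i<n. \<Sum>y<m i. S i y * partial_at (BSCR n m rs r) S i y)
       \<and> BSCR n m rs r S = (\<Sum>i<n. \<Sum>y<m i. S i y * AR_sub m rs S i y * AR_mod n m rs r S i)
       \<and> BSCR n m rs r S = (\<Sum>i<n. \<Sum>y<m i. SCR_Ai m rs S i y * AR_mod n m rs r S i)"
proof -
  define c where "c = (\<lambda>j. SCR_mod m rs S j)"
  define B where "B = BSCR n m rs r S"
  have Bpos: "B > 0" using assms(7) B_def by simp
  have symr: "\<forall>u\<in>{..<n}. \<forall>v\<in>{..<n}. r u v = r v u" using assms(5) by (auto simp: corr_matrix_def)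
  have Bsq: "B^2 = (\<Sum>j<n. \<Sum>w<n. c j * c w * r j w)"
    using sqrt_sq_pos[of "\<Sum>j<n. \<Sum>w<n. c j * c w * r j w"] Bpos by (simp add: B_def BSCR_def c_def)
  have D: "((\<lambda>t. BSCR n m rs r (S(i := (S i)(y := t))))
               has_real_derivative (AR_sub m rs S i y * AR_mod n m rs r S i)) (at (S i y))"
    if iy: "i < n" "y < m i" for i y
  proof -
    define Q where "Q = (\<Sum>x<m i. \<Sum>z<m i. S i x * S i z * rs i x z)"
    have cpos: "c i > 0" using assms(6) iy c_def by simp
    have csq: "(c i)^2 = Q" using sqrt_sq_pos[of Q] cpos by (simp add: c_def SCR_mod_def Q_def)
    have Qpos: "Q > 0" using csq cpos by (metis zero_less_power)
    have syms: "\<forall>u\<in>{..<m i}. \<forall>v\<in>{..<m i}. rs i u v = rs i v u"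
      using assms(4) iy by (auto simp: corr_matrix_def)
    have q: "DERIV (\<lambda>t. \<Sum>x\<in>{..<m i}. \<Sum>z\<in>{..<m i}. ((S i)(y := t)) x * ((S i)(y := t)) z * rs i x z) (S i y)
           :> 2 * (\<Sum>z\<in>{..<m i}. S i z * rs i y z) * 1"
      by (rule quad_deriv[where g="\<lambda>t. t" and a="S i" and A="{..<m i}" and M="rs i" and y=y
          and tz="S i y" and g'=1, OF _ _ syms DERIV_ident]) (use iy in auto)
    have q0: "(\<Sum>x\<in>{..<m i}. \<Sum>z\<in>{..<m i}. ((S i)(y := S i y)) x * ((S i)(y := S i y)) z * rs i x z) = Q"
      by (simp add: Q_def)
    have g: "DERIV (\<lambda>t. SCR_mod m rs (S(i := (S i)(y := t))) i) (S i y) :> AR_sub m rs S i y"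
    proof -
      have d1: "DERIV (\<lambda>t. sqrt (\<Sum>x\<in>{..<m i}. \<Sum>z\<in>{..<m i}. ((S i)(y := t)) x * ((S i)(y := t)) z * rs i x z)) (S i y)
           :> inverse (sqrt Q) / 2 * (2 * (\<Sum>z\<in>{..<m i}. S i z * rs i y z) * 1)"
        using DERIV_chain2[OF DERIV_real_sqrt q] Qpos q0 by simp
      have e2: "inverse (sqrt Q) / 2 * (2 * (\<Sum>z\<in>{..<m i}. S i z * rs i y z) * 1) = AR_sub m rs S i y"
      proof -
        have e: "SCR_mod m rs S i = sqrt Q" by (simp add: SCR_mod_def Q_def)
        show ?thesis unfolding AR_sub_def e by (rule half_inv)
      qed
      have e1: "(\<lambda>t. SCR_mod m rs (S(i := (S i)(y := t))) i)
         = (\<lambda>t. sqrt (\<Sum>x\<in>{..<m i}. \<Sum>z\<in>{..<m i}. ((S i)(y := t)) x * ((S i)(y := t)) z * rs i x z))"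
        unfolding SCR_mod_def by simp
      show ?thesis unfolding e1 e2[symmetric] by (rule d1)
    qed
    define G where "G = (\<lambda>t. SCR_mod m rs (S(i := (S i)(y := t))) i)"
    have G0: "G (S i y) = c i" by (simp add: G_def c_def)
    have eqf: "BSCR n m rs r (S(i := (S i)(y := t)))
        = sqrt (\<Sum>j\<in>{..<n}. \<Sum>w\<in>{..<n}. (c(i := G t)) j * (c(i := G t)) w * r j w)" for t
    proof -
      have "SCR_mod m rs (S(i := (S i)(y := t))) j = (c(i := G t)) j" for j
        by (cases "j = i") (auto simp: G_def c_def SCR_mod_def)
      then show ?thesis by (simp add: BSCR_def)
    qed
    have q2: "DERIV (\<lambda>t. \<Sum>j\<in>{..<n}. \<Sum>w\<in>{..<n}. (c(i := G t)) j * (c(i := G t)) w * r j w) (S i y)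
        :> 2 * (\<Sum>w\<in>{..<n}. c w * r i w) * AR_sub m rs S i y"
      by (rule quad_deriv[where A="{..<n}" and M=r and y=i and g=G and tz="S i y" and g'="AR_sub m rs S i y" and a=c, OF _ _ symr]) (use iy g G0 in \<open>auto simp: G_def\<close>)
    have q20: "(\<Sum>j\<in>{..<n}. \<Sum>w\<in>{..<n}. (c(i := G (S i y))) j * (c(i := G (S i y))) w * r j w) = B^2"
      using G0 Bsq by simp
    have d2: "DERIV (\<lambda>t. sqrt (\<Sum>j\<in>{..<n}. \<Sum>w\<in>{..<n}. (c(i := G t)) j * (c(i := G t)) w * r j w)) (S i y)
        :> inverse (sqrt (B^2)) / 2 * (2 * (\<Sum>w\<in>{..<n}. c w * r i w) * AR_sub m rs S i y)"
      using DERIV_chain2[OF DERIV_real_sqrt q2] q20 Bpos by simp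
    have e3: "inverse (sqrt (B^2)) / 2 * (2 * (\<Sum>w\<in>{..<n}. c w * r i w) * AR_sub m rs S i y)
        = AR_sub m rs S i y * AR_mod n m rs r S i"
      unfolding AR_mod_def B_def[symmetric] c_def using half_inv2[OF Bpos] by simp
    show ?thesis unfolding eqf e3[symmetric] by (rule d2)
  qed
  have E: "B = (\<Sum>i<n. \<Sum>y<m i. S i y * AR_sub m rs S i y * AR_mod n m rs r S i)"
  proof -
    have inner: "(\<Sum>y<m i. S i y * AR_sub m rs S i y) = c i" if "i < n" for i
    proof -
      define Q where "Q = (\<Sum>x<m i. \<Sum>z<m i. S i x * S i z * rs i x z)"
      have cpos: "c i > 0" using assms(6) that c_def by simp
      have csq: "(c i)^2 = Q" using sqrt_sq_pos[of Q] cpos by (simp add: c_def SCR_mod_def Q_def)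
      have "(\<Sum>y<m i. S i y * AR_sub m rs S i y) = Q / c i"
        by (simp add: AR_sub_def Q_def c_def sum_divide_distrib sum_distrib_left mult.assoc)
      also have "\<dots> = (c i * c i) / c i" using csq by (simp add: power2_eq_square)
      also have "\<dots> = c i" using cpos by simp
      finally show ?thesis .
    qed
    have "(\<Sum>i<n. \<Sum>y<m i. S i y * AR_sub m rs S i y * AR_mod n m rs r S i)
        = (\<Sum>i<n. c i * AR_mod n m rs r S i)"
      using inner by (simp add: sum_distrib_right[symmetric])
    also have "\<dots> = (\<Sum>i<n. \<Sum>w<n. c i * c w * r i w) / B"
      by (simp add: AR_mod_def c_def B_def sum_divide_distrib sum_distrib_left mult.assoc)
    also have "\<dots> = (B * B) / B" using Bsq by (simp add: power2_eq_square)
    also have "\<dots> = B" using Bpos by simp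
    finally show ?thesis by simp
  qed
  have P: "partial_at (BSCR n m rs r) S i y = AR_sub m rs S i y * AR_mod n m rs r S i"
    if "i < n" "y < m i" for i y
    unfolding partial_at_def using DERIV_imp_deriv[OF D[OF that]] .
  have E2: "B = (\<Sum>i<n. \<Sum>y<m i. S i y * partial_at (BSCR n m rs r) S i y)"
    unfolding E by (intro sum.cong refl) (simp add: P mult.assoc)
  have E3: "B = (\<Sum>i<n. \<Sum>y<m i. SCR_Ai m rs S i y * AR_mod n m rs r S i)"
    unfolding E by (intro sum.cong refl) (simp add: SCR_Ai_def)
  show ?thesis
    using D E E2 E3 unfolding B_def by blast
qed

end
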